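(* Let $A$ be an associative algebra, $\sigma,\tau:A\to A$ two commuting algebra maps, and $R:A\to A$ a $\{\sigma,\tau\}$-Rota-Baxter operator commuting with $\sigma$ and $\tau$. Define $x\prec y=\sigma(x)R(y)$ and $x\succ y=R(x)\tau(y)$ for $x,y\in A$. Then $(A,\prec,\succ,\sigma,\tau)$ is a BiHom-dendriform algebra. Moreover, setting $x*y=x\prec y+x\succ y$, the 4-tuple $(A,*,\sigma,\tau)$ is a BiHom-associative algebra and $R$ is a morphism of BiHom-associative algebras from $(A,*,\sigma,\tau)$ to the Yau twist $A_{(\sigma,\tau)}=(A,\mu\circ(\sigma\otimes\tau),\sigma,\tau)$, i.e. $R$ commutes with $\sigma,\tau$ and $R(x*y)=\sigma(R(x))\tau(R(y))$ for all $x,y$.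
   Context: For algebra maps $\sigma,\tau$ of an algebra $A$, a linear map $R$ is a $\{\sigma,\tau\}$-Rota-Baxter operator if $R(\sigma(a))R(\tau(b))=R\big(\sigma(a)R(b)+R(a)\tau(b)\big)$ for all $a,b\in A$. A BiHom-associative algebra $(A,\mu,\alpha,\beta)$: linear space with bilinear multiplication $\mu(x\otimes y)=xy$ and linear maps $\alpha,\beta$ with $\alpha\beta=\beta\alpha$, $\alpha,\beta$ multiplicative, and $\alpha(x)(yz)=(xy)\beta(z)$ for all $x,y,z$. A BiHom-dendriform algebra $(A,\prec,\succ,\alpha',\beta')$: linear space with bilinear operations $\prec,\succ$ and commuting linear maps $\alpha',\beta'$ multiplicative for $\prec$ and $\succ$, such that $(x\prec y)\prec\beta'(z)=\alpha'(x)\prec(y\prec z+y\succ z)$, $(x\succ y)\prec\beta'(z)=\alpha'(x)\succ(y\prec z)$, $\alpha'(x)\succ(y\succ z)=(x\prec y+x\succ y)\succ\beta'(z)$ for all $x,y,z$. *)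

theory Defs
  imports Complex_Main
begin

text \<open>An associative (not necessarily unital) algebra over a field 'k is modelled
by a type 'a of class ring (associative multiplication, distributive) together
with a scalar multiplication scale making it a 'k-vector space such that the
multiplication is 'k-bilinear.\<close>

definition assoc_algebra :: "('k::field \<Rightarrow> 'a::ring \<Rightarrow> 'a) \<Rightarrow> bool" where
  "assoc_algebra scale \<longleftrightarrow> Vector_Spaces.vector_space scale \<and>
     (\<forall>c x y. scale c (x * y) = scale c x * y \<and> scale c (x * y) = x * scale c y)"

definition bilinear_op :: "('k::field \<Rightarrow> 'a::ab_group_add \<Rightarrow> 'a) \<Rightarrow> ('a \<Rightarrow> 'a \<Rightarrow> 'a) \<Rightarrow> bool" where
  "bilinear_op scale mu \<longleftrightarrow> (\<forall>x. Vector_Spaces.linear scale scale (mu x)) \<and>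
     (\<forall>y. Vector_Spaces.linear scale scale (\<lambda>x. mu x y))"

definition alg_map :: "('k::field \<Rightarrow> 'a::ring \<Rightarrow> 'a) \<Rightarrow> ('a \<Rightarrow> 'a) \<Rightarrow> bool" where
  "alg_map scale f \<longleftrightarrow> Vector_Spaces.linear scale scale f \<and> (\<forall>x y. f (x * y) = f x * f y)"

definition rota_baxter_st ::
  "('k::field \<Rightarrow> 'a::ring \<Rightarrow> 'a) \<Rightarrow> ('a \<Rightarrow> 'a) \<Rightarrow> ('a \<Rightarrow> 'a) \<Rightarrow> ('a \<Rightarrow> 'a) \<Rightarrow> bool" where
  "rota_baxter_st scale \<sigma> \<tau> R \<longleftrightarrow> Vector_Spaces.linear scale scale R \<and>
     (\<forall>a b. R (\<sigma> a) * R (\<tau> b) = R (\<sigma> a * R b + R a * \<tau> b))"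

definition bihom_assoc ::
  "('k::field \<Rightarrow> 'a::ab_group_add \<Rightarrow> 'a) \<Rightarrow> ('a \<Rightarrow> 'a \<Rightarrow> 'a) \<Rightarrow> ('a \<Rightarrow> 'a) \<Rightarrow> ('a \<Rightarrow> 'a) \<Rightarrow> bool" where
  "bihom_assoc scale mu \<alpha> \<beta> \<longleftrightarrow> bilinear_op scale mu \<and>
     Vector_Spaces.linear scale scale \<alpha> \<and> Vector_Spaces.linear scale scale \<beta> \<and>
     \<alpha> \<circ> \<beta> = \<beta> \<circ> \<alpha> \<and>
     (\<forall>x y. \<alpha> (mu x y) = mu (\<alpha> x) (\<alpha> y)) \<and> (\<forall>x y. \<beta> (mu x y) = mu (\<beta> x) (\<beta> y)) \<and>
     (\<forall>x y z. mu (\<alpha> x) (mu y z) = mu (mu x y) (\<beta> z))"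

definition bihom_dendriform ::
  "('k::field \<Rightarrow> 'a::ab_group_add \<Rightarrow> 'a) \<Rightarrow> ('a \<Rightarrow> 'a \<Rightarrow> 'a) \<Rightarrow> ('a \<Rightarrow> 'a \<Rightarrow> 'a)
     \<Rightarrow> ('a \<Rightarrow> 'a) \<Rightarrow> ('a \<Rightarrow> 'a) \<Rightarrow> bool" where
  "bihom_dendriform scale l r \<alpha> \<beta> \<longleftrightarrow> bilinear_op scale l \<and> bilinear_op scale r \<and>
     Vector_Spaces.linear scale scale \<alpha> \<and> Vector_Spaces.linear scale scale \<beta> \<and>
     \<alpha> \<circ> \<beta> = \<beta> \<circ> \<alpha> \<and>
     (\<forall>x y. \<alpha> (l x y) = l (\<alpha> x) (\<alpha> y)) \<and> (\<forall>x y. \<beta> (l x y) = l (\<beta> x) (\<beta> y)) \<and>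
     (\<forall>x y. \<alpha> (r x y) = r (\<alpha> x) (\<alpha> y)) \<and> (\<forall>x y. \<beta> (r x y) = r (\<beta> x) (\<beta> y)) \<and>
     (\<forall>x y z. l (l x y) (\<beta> z) = l (\<alpha> x) (l y z + r y z)) \<and>
     (\<forall>x y z. l (r x y) (\<beta> z) = r (\<alpha> x) (l y z)) \<and>
     (\<forall>x y z. r (\<alpha> x) (r y z) = r (l x y + r x y) (\<beta> z))"

definition bihom_assoc_morphism ::
  "('k::field \<Rightarrow> 'a::ab_group_add \<Rightarrow> 'a) \<Rightarrow> ('a \<Rightarrow> 'a \<Rightarrow> 'a) \<Rightarrow> ('a \<Rightarrow> 'a) \<Rightarrow> ('a \<Rightarrow> 'a)
     \<Rightarrow> ('a \<Rightarrow> 'a \<Rightarrow> 'a) \<Rightarrow> ('a \<Rightarrow> 'a) \<Rightarrow> ('a \<Rightarrow> 'a) \<Rightarrow> ('a \<Rightarrow> 'a) \<Rightarrow> bool" where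
  "bihom_assoc_morphism scale mu1 \<alpha>1 \<beta>1 mu2 \<alpha>2 \<beta>2 f \<longleftrightarrow>
     Vector_Spaces.linear scale scale f \<and> f \<circ> \<alpha>1 = \<alpha>2 \<circ> f \<and> f \<circ> \<beta>1 = \<beta>2 \<circ> f \<and>
     (\<forall>x y. f (mu1 x y) = mu2 (f x) (f y))"

end

theory Submission
  imports Defs
begin

theorem mainTheorem5:
  fixes scale :: "'k::field \<Rightarrow> 'a::ring \<Rightarrow> 'a"
    and \<sigma> \<tau> R :: "'a \<Rightarrow> 'a"
  assumes "assoc_algebra scale"
    and "alg_map scale \<sigma>" and "alg_map scale \<tau>" and "\<sigma> \<circ> \<tau> = \<tau> \<circ> \<sigma>"
    and "rota_baxter_st scale \<sigma> \<tau> R"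
    and "R \<circ> \<sigma> = \<sigma> \<circ> R" and "R \<circ> \<tau> = \<tau> \<circ> R"
  shows "bihom_dendriform scale (\<lambda>x y. \<sigma> x * R y) (\<lambda>x y. R x * \<tau> y) \<sigma> \<tau>
    \<and> bihom_assoc scale (\<lambda>x y. \<sigma> x * R y + R x * \<tau> y) \<sigma> \<tau>
    \<and> bihom_assoc scale (\<lambda>x y. \<sigma> x * \<tau> y) \<sigma> \<tau>
    \<and> bihom_assoc_morphism scale (\<lambda>x y. \<sigma> x * R y + R x * \<tau> y) \<sigma> \<tau>
        (\<lambda>x y. \<sigma> x * \<tau> y) \<sigma> \<tau> R"
proof -
  note LI = Vector_Spaces.linear_iff
  have vs: "vector_space scale" and sm: "\<And>c x y. scale c (x * y) = scale c x * y"
    using assms(1) unfolding assoc_algebra_def by auto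
  have sm2: "\<And>c x y. scale c (x * y) = x * scale c y"
    using assms(1) unfolding assoc_algebra_def by blast
  have ls: "Vector_Spaces.linear scale scale \<sigma>" and ms: "\<And>x y. \<sigma> (x*y) = \<sigma> x * \<sigma> y"
    using assms(2) unfolding alg_map_def by auto
  have lt: "Vector_Spaces.linear scale scale \<tau>" and mt: "\<And>x y. \<tau> (x*y) = \<tau> x * \<tau> y"
    using assms(3) unfolding alg_map_def by auto
  have lR: "Vector_Spaces.linear scale scale R"
    and rb: "\<And>a b. R (\<sigma> a) * R (\<tau> b) = R (\<sigma> a * R b + R a * \<tau> b)"
    using assms(5) unfolding rota_baxter_st_def by auto
  have st: "\<And>x. \<sigma> (\<tau> x) = \<tau> (\<sigma> x)" using assms(4) by (metis comp_apply)
  have Rs: "\<And>x. R (\<sigma> x) = \<sigma> (R x)" using assms(6) by (metis comp_apply)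
  have Rt: "\<And>x. R (\<tau> x) = \<tau> (R x)" using assms(7) by (metis comp_apply)
  have sa: "\<And>x y. \<sigma> (x+y) = \<sigma> x + \<sigma> y" and ss: "\<And>c x. \<sigma> (scale c x) = scale c (\<sigma> x)"
    using ls unfolding LI by auto
  have ta: "\<And>x y. \<tau> (x+y) = \<tau> x + \<tau> y" and ts: "\<And>c x. \<tau> (scale c x) = scale c (\<tau> x)"
    using lt unfolding LI by auto
  have Ra: "\<And>x y. R (x+y) = R x + R y" and Rsc: "\<And>c x. R (scale c x) = scale c (R x)"
    using lR unfolding LI by auto
  have rb2: "\<And>a b. R (\<sigma> a * R b + R a * \<tau> b) = \<sigma> (R a) * \<tau> (R b)"
    using rb Rs Rt by metis
  have bil: "\<And>f g. Vector_Spaces.linear scale scale f \<Longrightarrow> Vector_Spaces.linear scale scale g \<Longrightarrow>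
     bilinear_op scale (\<lambda>x y. f x * g y)"
    unfolding bilinear_op_def LI using vs
    by (auto simp: distrib_left distrib_right sm[symmetric] sm2[symmetric])
  have bil2: "\<And>m1 m2. bilinear_op scale m1 \<Longrightarrow> bilinear_op scale m2 \<Longrightarrow>
     bilinear_op scale (\<lambda>x y. m1 x y + m2 x y)"
    unfolding bilinear_op_def LI using vs
    by (auto simp: algebra_simps vector_space.vector_space_assms(1)[OF vs])
  have cst: "\<sigma> \<circ> \<tau> = \<tau> \<circ> \<sigma>" by (rule assms(4))
  have D: "bihom_dendriform scale (\<lambda>x y. \<sigma> x * R y) (\<lambda>x y. R x * \<tau> y) \<sigma> \<tau>"
    unfolding bihom_dendriform_def
    using bil[OF ls lR] bil[OF lR lt] ls lt cst
    apply (intro conjI allI; simp add: ms mt Rs Rt st mult.assoc)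
      apply (metis Rs Rt mult.assoc rb)
     apply (metis Rs Rt mult.assoc rb)
    done
  show ?thesis
    unfolding bihom_assoc_def bihom_assoc_morphism_def
    using bil2[OF bil[OF ls lR] bil[OF lR lt]] bil[OF ls lt] ls lt cst lR D assms(6,7)
    by (intro conjI allI; simp add: rb2 ms mt Rs Rt st mult.assoc distrib_left distrib_right sa ta)
qed

end
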